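(* Let $n,k,r$ be integers with $k,r\geq 2$ and $n\geq 2k$, and write $n=pk+q$ with integers $p,q$ and $1\leq q\leq k$. Let $H_U(n;k,r)$ be the $r$-uniform hypergraph whose vertex set is a disjoint union $A\cup B_1\cup\cdots\cup B_p$ with $|A|=k$, $|B_i|=k$ for $1\leq i\leq p-1$ and $|B_p|=q$, and whose edges are exactly the $r$-subsets $e$ of the vertex set such that either $e$ meets both $A$ and $B_1\cup\cdots\cup B_p$, or $e\subseteq B_i$ for some $i$ (i.e. $H_U(n;k,r)=((p-1)K_k^r\cup K_q^r)\vee_r (K_k^r)^c$). Then $H_U(n;k,r)$ is vertex-$k$-maximal, and $|E(H_U(n;k,r))|\leq \binom{n}{r}-\binom{n-k}{r}+\left(\frac{n}{k}-2\right)\binom{k}{r}$, with equality if $n$ is a multiple of $k$.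
   Context: Binomial coefficients satisfy $\binom{a}{b}=0$ when $b>a$. A hypergraph $H=(V,E)$ consists of a finite vertex set $V$ and a set $E$ of non-empty subsets of $V$ (edges); it is $r$-uniform if all edges have exactly $r$ elements. The complement $H^c$ has as edges the $r$-subsets of $V$ not in $E$. A subhypergraph is $H'=(V',E')$ with $V'\subseteq V$, $E'\subseteq E$. $H+e=(V,E\cup\{e\})$ for $e\in E(H^c)$. $H-Y$ is the hypergraph induced on $V\setminus Y$ (keeping edges contained in $V\setminus Y$). Connectedness is defined via paths (alternating sequences of distinct vertices and distinct edges with consecutive vertices in the intermediate edge). A vertex-cut is a set $X$ with $H-X$ disconnected. $\kappa(H)$ is the minimum size of a vertex-cut if one exists, and $|V(H)|-1$ otherwise. $\overline{\kappa}(H)=\max\{\kappa(H'): H'\subseteq H\}$. An $r$-uniform hypergraph $H$ is vertex-$k$-maximal if $\overline{\kappa}(H)\leq k$ but $\overline{\kappa}(H+e)\geq k+1$ for every $e\in E(H^c)$. *)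

theory Defs
  imports Complex_Main
begin

definition is_hypergraph :: "'a set \<Rightarrow> 'a set set \<Rightarrow> bool" where
  "is_hypergraph V E \<longleftrightarrow> finite V \<and> (\<forall>e\<in>E. e \<noteq> {} \<and> e \<subseteq> V)"

definition uniform :: "nat \<Rightarrow> 'a set \<Rightarrow> 'a set set \<Rightarrow> bool" where
  "uniform r V E \<longleftrightarrow> is_hypergraph V E \<and> (\<forall>e\<in>E. card e = r)"

definition is_path :: "'a set set \<Rightarrow> 'a list \<Rightarrow> 'a set list \<Rightarrow> bool" where
  "is_path E vs es \<longleftrightarrow> vs \<noteq> [] \<and> length es = length vs - 1 \<and> distinct vs \<and> distinct es \<and>
     (\<forall>i < length es. es ! i \<in> E \<and> vs ! i \<in> es ! i \<and> vs ! Suc i \<in> es ! i)"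

definition hconnected :: "'a set \<Rightarrow> 'a set set \<Rightarrow> bool" where
  "hconnected V E \<longleftrightarrow>
     (\<forall>u\<in>V. \<forall>v\<in>V. \<exists>vs es. is_path E vs es \<and> hd vs = u \<and> last vs = v)"

definition del_edges :: "'a set \<Rightarrow> 'a set set \<Rightarrow> 'a set \<Rightarrow> 'a set set" where
  "del_edges V E Y = {e \<in> E. e \<subseteq> V - Y}"

definition vertex_cut :: "'a set \<Rightarrow> 'a set set \<Rightarrow> 'a set \<Rightarrow> bool" where
  "vertex_cut V E X \<longleftrightarrow> X \<subseteq> V \<and> \<not> hconnected (V - X) (del_edges V E X)"

definition kappa :: "'a set \<Rightarrow> 'a set set \<Rightarrow> nat" where
  "kappa V E = (if \<exists>X. vertex_cut V E X
                then (LEAST m. \<exists>X. vertex_cut V E X \<and> card X = m)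
                else card V - 1)"

definition kappa_bar :: "'a set \<Rightarrow> 'a set set \<Rightarrow> nat" where
  "kappa_bar V E = Max {kappa V' E' | V' E'. V' \<subseteq> V \<and> E' \<subseteq> E \<and> is_hypergraph V' E'}"

definition compl_edges :: "nat \<Rightarrow> 'a set \<Rightarrow> 'a set set \<Rightarrow> 'a set set" where
  "compl_edges r V E = {e. e \<subseteq> V \<and> card e = r} - E"

definition vertex_k_maximal :: "nat \<Rightarrow> nat \<Rightarrow> 'a set \<Rightarrow> 'a set set \<Rightarrow> bool" where
  "vertex_k_maximal r k V E \<longleftrightarrow> uniform r V E \<and> kappa_bar V E \<le> k \<and>
     (\<forall>e \<in> compl_edges r V E. kappa_bar V (insert e E) \<ge> k + 1)"

definition HU_vertices :: "'a set \<Rightarrow> (nat \<Rightarrow> 'a set) \<Rightarrow> nat \<Rightarrow> 'a set" where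
  "HU_vertices A B p = A \<union> (\<Union>i\<in>{1..p}. B i)"

definition HU_edges :: "nat \<Rightarrow> 'a set \<Rightarrow> (nat \<Rightarrow> 'a set) \<Rightarrow> nat \<Rightarrow> 'a set set" where
  "HU_edges r A B p = {e. e \<subseteq> HU_vertices A B p \<and> card e = r \<and>
      ((e \<inter> A \<noteq> {} \<and> e \<inter> (\<Union>i\<in>{1..p}. B i) \<noteq> {}) \<or> (\<exists>i\<in>{1..p}. e \<subseteq> B i))}"

end

theory Submission
  imports Defs
begin


lemma hconn_pairs:
  assumes "\<And>u v. u \<in> R \<Longrightarrow> v \<in> R \<Longrightarrow> u \<noteq> v \<Longrightarrow> (\<exists>f\<in>F. u\<in>f \<and> v\<in>f) \<or>
     (\<exists>w f g. f\<in>F \<and> g\<in>F \<and> f\<noteq>g \<and> u\<in>f \<and> w\<in>f \<and> w\<in>g \<and> v\<in>g \<and> u\<noteq>w \<and> w\<noteq>v)"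
  shows "hconnected R F"
  unfolding hconnected_def
proof (intro ballI)
  fix u v assume u: "u \<in> R" and v: "v \<in> R"
  show "\<exists>vs es. is_path F vs es \<and> hd vs = u \<and> last vs = v"
  proof (cases "u = v")
    case True
    have "is_path F [u] []" by (simp add: is_path_def)
    then show ?thesis using True by force
  next
    case False
    from assms[OF u v False] show ?thesis
    proof
      assume "\<exists>f\<in>F. u\<in>f \<and> v\<in>f"
      then obtain f where f: "f \<in> F" "u \<in> f" "v \<in> f" by blast
      have "is_path F [u,v] [f]" using f False by (simp add: is_path_def)
      then show ?thesis by force
    next
      assume "\<exists>w f g. f\<in>F \<and> g\<in>F \<and> f\<noteq>g \<and> u\<in>f \<and> w\<in>f \<and> w\<in>g \<and> v\<in>g \<and> u\<noteq>w \<and> w\<noteq>v"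
      then obtain w f g where h: "f\<in>F" "g\<in>F" "f\<noteq>g" "u\<in>f" "w\<in>f" "w\<in>g" "v\<in>g" "u\<noteq>w" "w\<noteq>v" by blast
      have "is_path F [u,w,v] [f,g]" using h False
        by (auto simp add: is_path_def less_Suc_eq)
      then show ?thesis by force
    qed
  qed
qed

lemma exists_superset_card:
  assumes "finite R" "S \<subseteq> R" "card S \<le> m" "m \<le> card R"
  obtains f where "S \<subseteq> f" "f \<subseteq> R" "card f = m"
proof -
  have fS: "finite S" using assms finite_subset by blast
  have "m - card S \<le> card (R - S)" using assms card_Diff_subset[OF fS assms(2)] by simp
  then obtain T where T: "T \<subseteq> R - S" "card T = m - card S" "finite T"
    by (meson obtain_subset_with_card_n)
  have "card (S \<union> T) = card S + card T" using T fS by (intro card_Un_disjoint) auto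
  then have "card (S \<union> T) = m" using T assms by simp
  then show ?thesis using that[of "S \<union> T"] T assms by blast
qed

lemma pair_edge:
  assumes "finite R" "x \<in> R" "y \<in> R" "2 \<le> r" "r \<le> card R"
  obtains f where "x \<in> f" "y \<in> f" "f \<subseteq> R" "card f = r"
proof -
  have "card {x,y} \<le> r" using assms by (cases "x = y") auto
  moreover have "{x,y} \<subseteq> R" using assms by auto
  ultimately obtain f where "{x,y} \<subseteq> f" "f \<subseteq> R" "card f = r"
    using exists_superset_card[of R "{x,y}" r] assms by blast
  then show ?thesis using that by blast
qed

lemma cross_conn:
  assumes fin: "finite R" and rR: "r \<le> card R" and r2: "2 \<le> r"
    and cr: "\<And>f. f \<subseteq> R \<Longrightarrow> card f = r \<Longrightarrow> f \<inter> P \<noteq> {} \<Longrightarrow> f - P \<noteq> {} \<Longrightarrow> f \<in> F"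
    and a: "a \<in> R" "a \<in> P" and b: "b \<in> R" "b \<notin> P"
  shows "hconnected R F"
proof (rule hconn_pairs)
  have dir: "\<exists>f\<in>F. x\<in>f \<and> y\<in>f" if xy: "x \<in> R" "y \<in> R" "x \<in> P" "y \<notin> P" for x y
  proof -
    obtain f where f: "x \<in> f" "y \<in> f" "f \<subseteq> R" "card f = r"
      using pair_edge[OF fin xy(1,2) r2 rR] by blast
    then have "f \<in> F" using cr[OF f(3,4)] xy by blast
    then show ?thesis using f by blast
  qed
  fix u v assume u: "u \<in> R" and v: "v \<in> R" and uv: "u \<noteq> v"
  show "(\<exists>f\<in>F. u\<in>f \<and> v\<in>f) \<or>
     (\<exists>w f g. f\<in>F \<and> g\<in>F \<and> f\<noteq>g \<and> u\<in>f \<and> w\<in>f \<and> w\<in>g \<and> v\<in>g \<and> u\<noteq>w \<and> w\<noteq>v)"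
  proof (cases "u \<in> P")
    case uP: True
    show ?thesis
    proof (cases "v \<in> P")
      case True
      obtain f where f: "f \<in> F" "u \<in> f" "b \<in> f" using dir[OF u b(1) uP b(2)] by blast
      obtain g where g: "g \<in> F" "v \<in> g" "b \<in> g" using dir[OF v b(1) True b(2)] by blast
      show ?thesis
      proof (cases "f = g")
        case True then show ?thesis using f g by blast
      next
        case False
        then show ?thesis using f g uP True b by metis
      qed
    next
      case False then show ?thesis using dir[OF u v uP] by blast
    qed
  next
    case uP: False
    show ?thesis
    proof (cases "v \<in> P")
      case True then show ?thesis using dir[OF v u True uP] by blast
    next
      case False
      obtain f where f: "f \<in> F" "a \<in> f" "u \<in> f" using dir[OF a(1) u a(2) uP] by blast
      obtain g where g: "g \<in> F" "a \<in> g" "v \<in> g" using dir[OF a(1) v a(2) False] by blast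
      show ?thesis
      proof (cases "f = g")
        case True then show ?thesis using f g by blast
      next
        case ne: False
        then show ?thesis using f g uP False a by metis
      qed
    qed
  qed
qed

lemma complete_conn:
  assumes fin: "finite R" and rR: "r \<le> card R" and r2: "2 \<le> r"
    and cr: "\<And>f. f \<subseteq> R \<Longrightarrow> card f = r \<Longrightarrow> f \<in> F"
  shows "hconnected R F"
proof (rule hconn_pairs)
  fix u v assume u: "u \<in> R" and v: "v \<in> R"
  obtain f where f: "u \<in> f" "v \<in> f" "f \<subseteq> R" "card f = r"
    using pair_edge[OF fin u v r2 rR] by blast
  then show "(\<exists>f\<in>F. u\<in>f \<and> v\<in>f) \<or>
     (\<exists>w f g. f\<in>F \<and> g\<in>F \<and> f\<noteq>g \<and> u\<in>f \<and> w\<in>f \<and> w\<in>g \<and> v\<in>g \<and> u\<noteq>w \<and> w\<noteq>v)"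
    using cr by blast
qed

lemma disconn:
  assumes "u \<in> R" "v \<in> R" "u \<in> P" "v \<notin> P" "\<forall>f\<in>F. f \<subseteq> P \<or> f \<inter> P = {}"
  shows "\<not> hconnected R F"
proof
  assume "hconnected R F"
  then obtain vs es where p: "is_path F vs es" "hd vs = u" "last vs = v"
    using assms unfolding hconnected_def by blast
  have ne: "vs \<noteq> []" and len: "length es = length vs - 1"
    and st: "\<forall>i < length es. es ! i \<in> F \<and> vs ! i \<in> es ! i \<and> vs ! Suc i \<in> es ! i"
    using p(1) by (auto simp: is_path_def)
  have "\<forall>i. i < length vs \<longrightarrow> vs ! i \<in> P"
  proof
    fix i show "i < length vs \<longrightarrow> vs ! i \<in> P"
    proof (induction i)
      case 0 then show ?case using p(2) ne assms(3) by (simp add: hd_conv_nth)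
    next
      case (Suc i)
      show ?case
      proof
        assume "Suc i < length vs"
        then have i: "i < length es" using len by simp
        then have "vs ! i \<in> P" using Suc.IH len by simp
        then have "es ! i \<subseteq> P" using st i assms(5) by blast
        then show "vs ! Suc i \<in> P" using st i by blast
      qed
    qed
  qed
  then have "last vs \<in> P" using ne by (simp add: last_conv_nth)
  then show False using p(3) assms(4) by simp
qed

lemma kappa_le_card: "finite V \<Longrightarrow> kappa V E \<le> card V - 1"
proof -
  assume fin: "finite V"
  show ?thesis
  proof (cases "\<exists>X. vertex_cut V E X")
    case True
    then obtain X where X: "vertex_cut V E X" by blast
    have "X \<noteq> V" using X unfolding vertex_cut_def hconnected_def by auto
    then have "card X < card V" using X fin unfolding vertex_cut_def by (meson psubsetI psubset_card_mono)
    moreover have "(LEAST m. \<exists>X. vertex_cut V E X \<and> card X = m) \<le> card X"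
      using X by (intro Least_le) blast
    ultimately show ?thesis using True unfolding kappa_def by simp
  next
    case False
    have "kappa V E = card V - 1" unfolding kappa_def using False by (rule if_not_P)
    then show ?thesis by simp
  qed
qed

lemma kappa_le_cut: "vertex_cut V E X \<Longrightarrow> card X \<le> k \<Longrightarrow> kappa V E \<le> k"
proof -
  assume X: "vertex_cut V E X" and c: "card X \<le> k"
  have "(LEAST m. \<exists>X. vertex_cut V E X \<and> card X = m) \<le> card X"
    using X by (intro Least_le) blast
  then show ?thesis using X c unfolding kappa_def by auto
qed

lemma kappa_ge:
  assumes "finite V" "k + 2 \<le> card V"
    "\<And>X. X \<subseteq> V \<Longrightarrow> card X \<le> k \<Longrightarrow> hconnected (V - X) (del_edges V E X)"
  shows "k + 1 \<le> kappa V E"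
proof (cases "\<exists>X. vertex_cut V E X")
  case True
  then obtain X where X: "vertex_cut V E X \<and> card X = (LEAST m. \<exists>X. vertex_cut V E X \<and> card X = m)"
    using LeastI_ex[of "\<lambda>m. \<exists>X. vertex_cut V E X \<and> card X = m"] by blast
  have "\<not> card X \<le> k" using X assms(3) unfolding vertex_cut_def by blast
  then show ?thesis using X True unfolding kappa_def by simp
next
  case False
  have "kappa V E = card V - 1" unfolding kappa_def using False by (rule if_not_P)
  then show ?thesis using assms by simp
qed

lemma kappa_bar_le:
  assumes "finite V"
    "\<And>V' E'. V' \<subseteq> V \<Longrightarrow> E' \<subseteq> E \<Longrightarrow> is_hypergraph V' E' \<Longrightarrow> kappa V' E' \<le> k"
  shows "kappa_bar V E \<le> k"
proof -
  let ?S = "{kappa V' E' | V' E'. V' \<subseteq> V \<and> E' \<subseteq> E \<and> is_hypergraph V' E'}"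
  have "?S \<subseteq> {..card V}"
  proof
    fix x assume "x \<in> ?S"
    then obtain V' E' where "x = kappa V' E'" "V' \<subseteq> V" by blast
    moreover have "finite V'" using calculation assms(1) finite_subset by blast
    ultimately have "x \<le> card V' - 1" using kappa_le_card[of V' E'] by simp
    moreover have "card V' \<le> card V" using card_mono[OF assms(1) \<open>V' \<subseteq> V\<close>] .
    ultimately show "x \<in> {..card V}" by simp
  qed
  then have fin: "finite ?S" using finite_subset by blast
  have "is_hypergraph {} ({}::'a set set)" by (simp add: is_hypergraph_def)
  then have "kappa ({}::'a set) {} \<in> ?S" by blast
  then have ne: "?S \<noteq> {}" by blast
  show ?thesis unfolding kappa_bar_def using fin ne assms(2) by (auto simp: Max_le_iff)
qed

lemma kappa_bar_ge:
  assumes "finite V" "V' \<subseteq> V" "E' \<subseteq> E" "is_hypergraph V' E'" "m \<le> kappa V' E'"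
  shows "m \<le> kappa_bar V E"
proof -
  let ?S = "{kappa V' E' | V' E'. V' \<subseteq> V \<and> E' \<subseteq> E \<and> is_hypergraph V' E'}"
  have "?S \<subseteq> {..card V}"
  proof
    fix x assume "x \<in> ?S"
    then obtain V' E' where "x = kappa V' E'" "V' \<subseteq> V" by blast
    moreover have "finite V'" using calculation assms(1) finite_subset by blast
    ultimately have "x \<le> card V' - 1" using kappa_le_card[of V' E'] by simp
    moreover have "card V' \<le> card V" using card_mono[OF assms(1) \<open>V' \<subseteq> V\<close>] .
    ultimately show "x \<in> {..card V}" by simp
  qed
  then have fin: "finite ?S" using finite_subset by blast
  have "kappa V' E' \<in> ?S" using assms by blast
  then show ?thesis unfolding kappa_bar_def using fin assms(5) Max_ge le_trans by blast
qed



locale HUL =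
  fixes n k r p q :: nat and A :: "'a set" and B :: "nat \<Rightarrow> 'a set"
  assumes k2: "k \<ge> 2" and r2: "r \<ge> 2" and n2k: "n \<ge> 2 * k"
    and npq: "n = p * k + q" and q1: "1 \<le> q" and qk: "q \<le> k"
    and finA: "finite A" and cardA: "card A = k"
    and finB: "\<forall>i\<in>{1..p}. finite (B i)"
    and cardB: "\<forall>i\<in>{1..<p}. card (B i) = k" and cardBp: "card (B p) = q"
    and disjAB: "\<forall>i\<in>{1..p}. A \<inter> B i = {}"
    and disjBB: "\<forall>i\<in>{1..p}. \<forall>j\<in>{1..p}. i \<noteq> j \<longrightarrow> B i \<inter> B j = {}"
begin

abbreviation "Bs \<equiv> (\<Union>i\<in>{1..p}. B i)"
abbreviation "U \<equiv> HU_vertices A B p"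
abbreviation "E \<equiv> HU_edges r A B p"

lemma p1: "1 \<le> p"
proof (rule ccontr)
  assume "\<not> 1 \<le> p" then have "p = 0" by simp
  then show False using npq n2k qk k2 by simp
qed

lemma U_eq: "U = A \<union> Bs" by (simp add: HU_vertices_def)

lemma finBs: "finite Bs" using finB by blast
lemma finU: "finite U" using finBs finA U_eq by simp
lemma AB: "A \<inter> Bs = {}" using disjAB by blast

lemma cardBi: "i \<in> {1..p} \<Longrightarrow> card (B i) \<le> k"
  using cardB cardBp qk by (cases "i = p") auto

lemma cardB1: "card (B 1) = k"
proof (cases "p = 1")
  case True
  then have "q = k" using npq n2k qk by simp
  then show ?thesis using True cardBp by simp
next
  case False then show ?thesis using cardB p1 by simp
qed

lemma E_iff: "f \<in> E \<longleftrightarrow> f \<subseteq> U \<and> card f = r \<and>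
      ((f \<inter> A \<noteq> {} \<and> f \<inter> Bs \<noteq> {}) \<or> (\<exists>i\<in>{1..p}. f \<subseteq> B i))"
  by (simp add: HU_edges_def)

lemma E_card: "f \<in> E \<Longrightarrow> card f = r" by (simp add: E_iff)
lemma E_sub: "f \<in> E \<Longrightarrow> f \<subseteq> U" by (simp add: E_iff)

lemma cross_E: "f \<subseteq> U \<Longrightarrow> card f = r \<Longrightarrow> f \<inter> A \<noteq> {} \<Longrightarrow> f - A \<noteq> {} \<Longrightarrow> f \<in> E"
  unfolding E_iff U_eq by blast

lemma block_E: "i \<in> {1..p} \<Longrightarrow> f \<subseteq> B i \<Longrightarrow> card f = r \<Longrightarrow> f \<in> E"
  unfolding E_iff U_eq by blast

lemma E_noA: "f \<in> E \<Longrightarrow> f \<inter> A = {} \<Longrightarrow> \<exists>i\<in>{1..p}. f \<subseteq> B i"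
  unfolding E_iff by blast

lemma E_notinA: "f \<in> E \<Longrightarrow> \<not> f \<subseteq> A"
proof
  assume f: "f \<in> E" "f \<subseteq> A"
  then have "f \<noteq> {}" using E_card r2 by force
  then have "f \<inter> Bs = {}" using f AB by blast
  then obtain i where "i \<in> {1..p}" "f \<subseteq> B i" using f unfolding E_iff by blast
  then show False using f disjAB \<open>f \<noteq> {}\<close> by blast
qed

lemma uniformE: "uniform r U E"
  unfolding uniform_def is_hypergraph_def using finU E_card E_sub r2 by force

lemma sub_le:
  assumes V': "V' \<subseteq> U" and E': "E' \<subseteq> E" and hg: "is_hypergraph V' E'"
  shows "kappa V' E' \<le> k"
proof -
  have finV: "finite V'" using V' finU finite_subset by blast
  show ?thesis
  proof (cases "card V' \<le> k + 1")
    case True then show ?thesis using kappa_le_card[OF finV, of E'] by simp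
  next
    case False
    have "card (V' \<inter> A) \<le> card A" by (rule card_mono[OF finA]) blast
    then have cVA: "card (V' \<inter> A) \<le> k" using cardA by simp
    have "V' - A \<noteq> {}"
    proof
      assume "V' - A = {}" then have "V' \<subseteq> A" by blast
      then have "card V' \<le> card A" by (rule card_mono[OF finA])
      then show False using cardA False by simp
    qed
    then obtain u where u: "u \<in> V'" "u \<notin> A" by blast
    then have "u \<in> Bs" using V' U_eq by blast
    then obtain i where i: "i \<in> {1..p}" "u \<in> B i" by blast
    show ?thesis
    proof (cases "V' - A \<subseteq> B i")
      case True
      let ?X = "V' - A"
      have "finite (B i)" using finB i by blast
      then have "card ?X \<le> card (B i)" using True by (rule card_mono)
      then have cX: "card ?X \<le> k" using cardBi[OF i(1)] by simp
      have R: "V' - ?X = V' \<inter> A" by blast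
      have "card (V' - ?X) = card V' - card ?X" using finV by (intro card_Diff_subset) auto
      then have "card (V' \<inter> A) \<ge> 2" using R False cX by simp
      then obtain T where T: "T \<subseteq> V' \<inter> A" "card T = 2" by (meson obtain_subset_with_card_n)
      then obtain a b where "T = {a,b}" "a \<noteq> b" by (meson card_2_iff)
      then have ab: "a \<in> V' \<inter> A" "b \<in> V' \<inter> A" "a \<noteq> b" using T by auto
      have nod: "del_edges V' E' ?X = {}"
      proof (rule ccontr)
        assume "del_edges V' E' ?X \<noteq> {}"
        then obtain f where "f \<in> E'" "f \<subseteq> V' - ?X" unfolding del_edges_def by blast
        then show False using E' E_notinA by blast
      qed
      have "\<not> hconnected (V' - ?X) (del_edges V' E' ?X)"
        by (rule disconn[of a "V' - ?X" b "{a}" "del_edges V' E' ?X"]) (use ab R nod in auto)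
      then have "vertex_cut V' E' ?X" unfolding vertex_cut_def by blast
      then show ?thesis using kappa_le_cut cX by blast
    next
      case False
      then obtain v where v: "v \<in> V'" "v \<notin> A" "v \<notin> B i" by blast
      let ?X = "V' \<inter> A"
      have "\<forall>f\<in>del_edges V' E' ?X. f \<subseteq> B i \<or> f \<inter> B i = {}"
      proof
        fix f assume "f \<in> del_edges V' E' ?X"
        then have f: "f \<in> E" "f \<inter> A = {}" using E' unfolding del_edges_def by auto
        then obtain j where j: "j \<in> {1..p}" "f \<subseteq> B j" using E_noA by blast
        show "f \<subseteq> B i \<or> f \<inter> B i = {}"
        proof (cases "j = i")
          case True then show ?thesis using j by blast
        next
          case False then show ?thesis using disjBB i j by blast
        qed
      qed
      then have "\<not> hconnected (V' - ?X) (del_edges V' E' ?X)"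
        by (intro disconn[of u "V' - ?X" v "B i" "del_edges V' E' ?X"]) (use u v i in auto)
      then have "vertex_cut V' E' ?X" unfolding vertex_cut_def by blast
      then show ?thesis using kappa_le_cut cVA by blast
    qed
  qed
qed

lemma kb_le: "kappa_bar U E \<le> k"
  by (rule kappa_bar_le[OF finU]) (rule sub_le)

end


context HUL begin

lemma del_simp: "X \<subseteq> V' \<Longrightarrow> del_edges V' {f \<in> F. f \<subseteq> V'} X = {f \<in> F. f \<subseteq> V' - X}"
  unfolding del_edges_def by blast

lemma add_edge:
  assumes e: "e \<in> compl_edges r U E"
  shows "k + 1 \<le> kappa_bar U (insert e E)"
proof -
  have eU: "e \<subseteq> U" and ce: "card e = r" and eE: "e \<notin> E"
    using e unfolding compl_edges_def by auto
  have fe: "finite e" using eU finU finite_subset by blast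
  have ene: "e \<noteq> {}" using ce r2 by force
  let ?E2 = "insert e E"
  have c2: "f \<in> ?E2 \<Longrightarrow> card f = r" for f using ce E_card by auto
  have main: "\<exists>V'. V' \<subseteq> U \<and> k + 2 \<le> card V' \<and>
     (\<forall>X. X \<subseteq> V' \<longrightarrow> card X \<le> k \<longrightarrow> hconnected (V' - X) {f \<in> ?E2. f \<subseteq> V' - X})"
  proof (cases "e \<inter> Bs = {}")
    case True
    then have eA: "e \<subseteq> A" using eU U_eq by blast
    have rk: "r \<le> k" using card_mono[OF finA eA] ce cardA by simp
    have B1: "1 \<in> {1..p}" using p1 by simp
    let ?V = "e \<union> B 1"
    have eB1: "e \<inter> B 1 = {}" using eA disjAB B1 by blast
    have fB1: "finite (B 1)" using finB B1 by blast
    have cV: "card ?V = r + k" using card_Un_disjoint[OF fe fB1 eB1] ce cardB1 by simp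
    have VU: "?V \<subseteq> U" using eU B1 U_eq by blast
    have fV: "finite ?V" using fe fB1 by simp
    have "\<forall>X. X \<subseteq> ?V \<longrightarrow> card X \<le> k \<longrightarrow> hconnected (?V - X) {f \<in> ?E2. f \<subseteq> ?V - X}"
    proof (intro allI impI)
      fix X assume X: "X \<subseteq> ?V" "card X \<le> k"
      let ?R = "?V - X"
      have fR: "finite ?R" using fV by simp
      have "card ?R = card ?V - card X" using fV X by (intro card_Diff_subset) (auto intro: finite_subset)
      then have cR: "r \<le> card ?R" using cV X by simp
      show "hconnected ?R {f \<in> ?E2. f \<subseteq> ?R}"
      proof (cases "?R \<inter> A \<noteq> {} \<and> ?R - A \<noteq> {}")
        case True
        then obtain a b where ab: "a \<in> ?R" "a \<in> A" "b \<in> ?R" "b \<notin> A" by blast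
        show ?thesis
        proof (rule cross_conn[OF fR cR r2, of A _ a b])
          fix f assume f: "f \<subseteq> ?R" "card f = r" "f \<inter> A \<noteq> {}" "f - A \<noteq> {}"
          have "f \<subseteq> U" using f(1) VU by blast
          then have "f \<in> E" using cross_E f by blast
          then show "f \<in> {f \<in> ?E2. f \<subseteq> ?R}" using f(1) by blast
        qed (use ab in auto)
      next
        case False
        then consider "?R - A = {}" | "?R \<inter> A = {}" by blast
        then show ?thesis
        proof cases
          case 1
          then have "?R \<subseteq> e" using eB1 disjAB B1 by blast
          have "?R = e" using card_subset_eq[OF fe \<open>?R \<subseteq> e\<close>] cR ce card_mono[OF fe \<open>?R \<subseteq> e\<close>] by simp
          show ?thesis
          proof (rule complete_conn[OF fR cR r2])
            fix f assume f: "f \<subseteq> ?R" "card f = r"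
            have "f = e" using card_subset_eq[OF fe] f \<open>?R = e\<close> ce by simp
            then show "f \<in> {f \<in> ?E2. f \<subseteq> ?R}" using f by blast
          qed
        next
          case 2
          then have RB: "?R \<subseteq> B 1" using eA by blast
          show ?thesis
          proof (rule complete_conn[OF fR cR r2])
            fix f assume f: "f \<subseteq> ?R" "card f = r"
            then have "f \<in> E" using block_E[OF B1] RB by blast
            then show "f \<in> {f \<in> ?E2. f \<subseteq> ?R}" using f by blast
          qed
        qed
      qed
    qed
    then show ?thesis using VU cV r2 by (intro exI[of _ ?V]) auto
  next
    case False
    have eA: "e \<inter> A = {}"
    proof (rule ccontr)
      assume "e \<inter> A \<noteq> {}"
      moreover have "e - A \<noteq> {}" using False eU U_eq AB by blast
      ultimately have "e \<in> E" using cross_E eU ce by blast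
      then show False using eE by blast
    qed
    have eBs: "e \<subseteq> Bs" using eA eU U_eq by blast
    have nblk: "\<not> e \<subseteq> B j" if "j \<in> {1..p}" for j using eE block_E that ce by blast
    obtain i where i: "i \<in> {1..p}" "e \<inter> B i \<noteq> {}" "card (B i) = k"
    proof -
      obtain x where x: "x \<in> e" using ene by blast
      then obtain j where j: "j \<in> {1..p}" "x \<in> B j" using eBs by blast
      show ?thesis
      proof (cases "j = p")
        case False
        then have "j \<in> {1..<p}" using j by auto
        then show ?thesis using that[of j] j x cardB by blast
      next
        case True
        then obtain y where y: "y \<in> e" "y \<notin> B p" using nblk j by blast
        then obtain j' where j': "j' \<in> {1..p}" "y \<in> B j'" using eBs by blast
        then have "j' \<noteq> p" using y by blast
        then have "j' \<in> {1..<p}" using j' by auto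
        then show ?thesis using that[of j'] j' y cardB by blast
      qed
    qed
    have fBi: "finite (B i)" using finB i by blast
    have eBi: "\<not> e \<subseteq> B i" using nblk i by blast
    define W where "W = (if r \<le> k then B i else {})"
    have fW: "finite W" using fBi W_def by simp
    have WB: "W \<subseteq> B i" using W_def by simp
    let ?N = "e \<union> W"
    have fN: "finite ?N" using fe fW by simp
    have cN: "k + 1 \<le> card ?N"
    proof (cases "r \<le> k")
      case True
      then have "B i \<subset> ?N" using W_def eBi by auto
      then have "card (B i) < card ?N" by (rule psubset_card_mono[OF fN])
      then show ?thesis using i by simp
    next
      case False
      then show ?thesis using card_mono[OF fN, of e] ce by simp
    qed
    have NA: "A \<inter> ?N = {}" using eA WB disjAB i by blast
    let ?V = "A \<union> ?N"
    have fV: "finite ?V" using finA fN by simp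
    have cV: "card ?V = k + card ?N" using card_Un_disjoint[OF finA fN NA] cardA by simp
    have VU: "?V \<subseteq> U" using eU WB i U_eq by blast
    have "\<forall>X. X \<subseteq> ?V \<longrightarrow> card X \<le> k \<longrightarrow> hconnected (?V - X) {f \<in> ?E2. f \<subseteq> ?V - X}"
    proof (intro allI impI)
      fix X assume X: "X \<subseteq> ?V" "card X \<le> k"
      let ?R = "?V - X"
      have fR: "finite ?R" using fV by simp
      have fX: "finite X" using X fV finite_subset by blast
      have "card ?R = card ?V - card X" using fV X by (intro card_Diff_subset) (auto intro: finite_subset)
      then have cR: "card ?N \<le> card ?R" using cV X by simp
      have "card e \<le> card ?N" using card_mono[OF fN] by simp
      then have rR: "r \<le> card ?R" using cR ce by simp
      show "hconnected ?R {f \<in> ?E2. f \<subseteq> ?R}"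
      proof (cases "?R \<inter> A \<noteq> {} \<and> ?R - A \<noteq> {}")
        case True
        then obtain a b where ab: "a \<in> ?R" "a \<in> A" "b \<in> ?R" "b \<notin> A" by blast
        show ?thesis
        proof (rule cross_conn[OF fR rR r2, of A _ a b])
          fix f assume f: "f \<subseteq> ?R" "card f = r" "f \<inter> A \<noteq> {}" "f - A \<noteq> {}"
          have "f \<subseteq> U" using f(1) VU by blast
          then have "f \<in> E" using cross_E f by blast
          then show "f \<in> {f \<in> ?E2. f \<subseteq> ?R}" using f(1) by blast
        qed (use ab in auto)
      next
        case False
        then consider "?R - A = {}" | "?R \<inter> A = {}" by blast
        then show ?thesis
        proof cases
          case 1
          then have "?N \<subseteq> X" using NA by blast
          then have "card ?N \<le> card X" using card_mono[OF fX] by blast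
          then show ?thesis using cN X(2) by simp
        next
          case 2
          then have "A \<subseteq> X" by blast
          moreover have "card A \<le> card X" using card_mono[OF fX \<open>A \<subseteq> X\<close>] .
          ultimately have "card A = card X" using X(2) cardA by simp
          then have "A = X" by (rule card_subset_eq[OF fX \<open>A \<subseteq> X\<close>])
          then have "X = A" by simp
          then have R: "?R = ?N" using NA by blast
          show ?thesis unfolding R
          proof (rule hconn_pairs)
            fix u v assume u: "u \<in> ?N" and v: "v \<in> ?N" and uv: "u \<noteq> v"
            have Wcase: "\<exists>f. f \<subseteq> B i \<and> card f = r \<and> x \<in> f \<and> y \<in> f"
              if "x \<in> W" "y \<in> W" for x y
            proof -
              have rk: "r \<le> k" using that W_def by (cases "r \<le> k") auto
              then show ?thesis using pair_edge[OF fBi, of x y r] that WB r2 i by blast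
            qed
            have eF: "e \<in> {f \<in> ?E2. f \<subseteq> ?N}" by auto
            have WF: "f \<in> {f \<in> ?E2. f \<subseteq> ?N}" if "f \<subseteq> B i" "card f = r" "f \<inter> W \<noteq> {}" for f
            proof -
              have "W = B i" using that W_def by (cases "r \<le> k") auto
              then show ?thesis using block_E[OF i(1) that(1,2)] that by auto
            qed
            show "(\<exists>f\<in>{f \<in> ?E2. f \<subseteq> ?N}. u\<in>f \<and> v\<in>f) \<or>
              (\<exists>w f g. f\<in>{f \<in> ?E2. f \<subseteq> ?N} \<and> g\<in>{f \<in> ?E2. f \<subseteq> ?N} \<and> f\<noteq>g \<and> u\<in>f \<and> w\<in>f \<and> w\<in>g \<and> v\<in>g \<and> u\<noteq>w \<and> w\<noteq>v)"
            proof (cases "u \<in> e \<and> v \<in> e")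
              case True then show ?thesis using eF by blast
            next
              case ne: False
              show ?thesis
              proof (cases "u \<in> W \<and> v \<in> W")
                case True
                then obtain f where f: "f \<subseteq> B i" "card f = r" "u \<in> f" "v \<in> f" using Wcase by blast
                have "f \<inter> W \<noteq> {}" using f(3) True by blast
                then have "f \<in> {f \<in> ?E2. f \<subseteq> ?N}" using WF[OF f(1,2)] by blast
                then show ?thesis using f(3,4) by blast
              next
                case False
                then have nW: "W \<noteq> {}" and
                  cs: "(u \<in> W \<and> u \<notin> e \<and> v \<in> e \<and> v \<notin> W) \<or> (u \<in> e \<and> u \<notin> W \<and> v \<in> W \<and> v \<notin> e)"
                  using u v ne by auto
                have WBi: "W = B i" using nW W_def by (cases "r \<le> k") auto
                obtain w where w: "w \<in> e" "w \<in> B i" using i by blast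
                from cs show ?thesis
                proof
                  assume c: "u \<in> W \<and> u \<notin> e \<and> v \<in> e \<and> v \<notin> W"
                  obtain f where f: "f \<subseteq> B i" "card f = r" "u \<in> f" "w \<in> f"
                    using Wcase[of u w] c w WBi by blast
                  have "f \<noteq> e" using f c by blast
                  moreover have "u \<noteq> w" "w \<noteq> v" using c w WBi by auto
                  moreover have fF: "f \<in> {f \<in> ?E2. f \<subseteq> ?N}"
                    using WF[OF f(1,2)] f(3) c by blast
                  ultimately show ?thesis
                    by (intro disjI2 exI[of _ w] exI[of _ f] exI[of _ e]) (use fF eF f c w in auto)
                next
                  assume c: "u \<in> e \<and> u \<notin> W \<and> v \<in> W \<and> v \<notin> e"
                  obtain f where f: "f \<subseteq> B i" "card f = r" "w \<in> f" "v \<in> f"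
                    using Wcase[of w v] c w WBi by blast
                  have "e \<noteq> f" using f c by blast
                  moreover have "u \<noteq> w" "w \<noteq> v" using c w WBi by auto
                  moreover have fF: "f \<in> {f \<in> ?E2. f \<subseteq> ?N}"
                    using WF[OF f(1,2)] f(4) c by blast
                  ultimately show ?thesis
                    by (intro disjI2 exI[of _ w] exI[of _ e] exI[of _ f]) (use fF eF f c w in auto)
                qed
              qed
            qed
          qed
        qed
      qed
    qed
    then show ?thesis using VU cV cN k2 by (intro exI[of _ ?V]) auto
  qed
  then obtain V' where V': "V' \<subseteq> U" "k + 2 \<le> card V'"
    "\<forall>X. X \<subseteq> V' \<longrightarrow> card X \<le> k \<longrightarrow> hconnected (V' - X) {f \<in> ?E2. f \<subseteq> V' - X}" by blast
  let ?E' = "{f \<in> ?E2. f \<subseteq> V'}"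
  have fV: "finite V'" using V'(1) finU finite_subset by blast
  have "\<forall>f\<in>?E'. f \<noteq> {} \<and> f \<subseteq> V'"
  proof
    fix f assume f: "f \<in> ?E'"
    then have "card f = r" using c2 by blast
    then have "f \<noteq> {}" using r2 by (intro notI) simp
    then show "f \<noteq> {} \<and> f \<subseteq> V'" using f by blast
  qed
  then have hg: "is_hypergraph V' ?E'" unfolding is_hypergraph_def using fV by blast
  have "k + 1 \<le> kappa V' ?E'"
  proof (rule kappa_ge[OF fV V'(2)])
    fix X assume X: "X \<subseteq> V'" "card X \<le> k"
    show "hconnected (V' - X) (del_edges V' ?E' X)"
      unfolding del_simp[OF X(1)] using V'(3) X by blast
  qed
  then show ?thesis using kappa_bar_ge[OF finU V'(1) _ hg] by blast
qed

end


lemma binom_ratio: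
  fixes k q r :: nat
  assumes "1 \<le> r" "q \<le> k"
  shows "k * (q choose r) \<le> q * (k choose r)"
proof -
  have r0: "0 < r" using assms by simp
  have a: "r * (q choose r) = q * ((q - 1) choose (r - 1))" by (rule times_binomial_minus1_eq[OF r0])
  have b: "r * (k choose r) = k * ((k - 1) choose (r - 1))" by (rule times_binomial_minus1_eq[OF r0])
  have c: "(q - 1) choose (r - 1) \<le> (k - 1) choose (r - 1)" using assms by (intro binomial_right_mono) simp
  have "r * (k * (q choose r)) = k * q * ((q - 1) choose (r - 1))" using a by (simp add: ac_simps)
  also have "\<dots> \<le> k * q * ((k - 1) choose (r - 1))" using c by simp
  also have "\<dots> = r * (q * (k choose r))" using b by (simp add: ac_simps)
  finally show ?thesis using r0 by simp
qed

context HUL begin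

lemma card_sum_blocks: "(\<Sum>i\<in>{1..p}. g (card (B i))) = real (p - 1) * g k + g q"
proof -
  have "{1..p} = insert p {1..<p}" using p1 by auto
  then have "(\<Sum>i\<in>{1..p}. g (card (B i))) = g (card (B p)) + (\<Sum>i\<in>{1..<p}. g (card (B i)))"
    by simp
  also have "(\<Sum>i\<in>{1..<p}. g (card (B i))) = (\<Sum>i\<in>{1..<p}. g k)"
    using cardB by (intro sum.cong) auto
  also have "\<dots> = real (p - 1) * g k" by simp
  finally show ?thesis using cardBp by simp
qed

lemma cardBs: "card Bs = n - k"
proof -
  have "card Bs = (\<Sum>i\<in>{1..p}. card (B i))"
    using finB disjBB by (intro card_UN_disjoint) auto
  then have "real (card Bs) = (\<Sum>i\<in>{1..p}. real (card (B i)))" by simp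
  also have "\<dots> = real (p - 1) * real k + real q" using card_sum_blocks[of real] by simp
  finally have "real (card Bs) = real (p - 1) * real k + real q" .
  moreover have "real n = real p * real k + real q" using npq by simp
  moreover have "real (p - 1) = real p - 1" using p1 by simp
  ultimately have "real (card Bs) = real n - real k" by (simp add: algebra_simps)
  then show ?thesis by linarith
qed

lemma cardU: "card U = n"
proof -
  have "card U = card A + card Bs" unfolding U_eq using finA finBs AB by (intro card_Un_disjoint) auto
  then show ?thesis using cardBs cardA npq n2k by simp
qed

lemma cardE: "real (card E) = real (n choose r) - real (k choose r) - real ((n - k) choose r)
   + real (p - 1) * real (k choose r) + real (q choose r)"
proof -
  define S where "S = {f. f \<subseteq> U \<and> card f = r}"
  define SA where "SA = {f. f \<subseteq> A \<and> card f = r}"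
  define SB where "SB = {f. f \<subseteq> Bs \<and> card f = r}"
  define E1 where "E1 = {f. f \<subseteq> U \<and> card f = r \<and> f \<inter> A \<noteq> {} \<and> f \<inter> Bs \<noteq> {}}"
  define F where "F = (\<lambda>i. {f. f \<subseteq> B i \<and> card f = r})"
  have fPU: "finite (Pow U)" using finU by simp
  have fS: "finite S" by (rule finite_subset[OF _ fPU]) (auto simp: S_def)
  have SAS: "SA \<subseteq> S" "SB \<subseteq> S" "E1 \<subseteq> S" unfolding S_def SA_def SB_def E1_def U_eq by auto
  have fSA: "finite SA" "finite SB" "finite E1" using SAS fS finite_subset by blast+
  have ne: "f \<noteq> {}" if "card f = r" for f :: "'a set" using that r2 by (intro notI) simp
  have dAB: "SA \<inter> SB = {}"
  proof (rule ccontr)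
    assume "SA \<inter> SB \<noteq> {}"
    then obtain f where "f \<subseteq> A" "f \<subseteq> Bs" "card f = r" unfolding SA_def SB_def by blast
    then show False using ne AB by blast
  qed
  have dE1: "E1 \<inter> (SA \<union> SB) = {}" unfolding E1_def SA_def SB_def using AB by blast
  have Seq: "S = E1 \<union> (SA \<union> SB)" unfolding S_def E1_def SA_def SB_def U_eq by blast
  have "card S = card E1 + (card SA + card SB)"
    unfolding Seq using fSA dAB dE1 by (simp add: card_Un_disjoint)
  moreover have "card S = n choose r" unfolding S_def using n_subsets[OF finU] cardU by simp
  moreover have "card SA = k choose r" unfolding SA_def using n_subsets[OF finA] cardA by simp
  moreover have "card SB = (n - k) choose r" unfolding SB_def using n_subsets[OF finBs] cardBs by simp
  ultimately have cE1: "real (card E1) = real (n choose r) - real (k choose r) - real ((n - k) choose r)"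
    by simp
  have fF: "finite (F i)" if "i \<in> {1..p}" for i
  proof -
    have "finite (Pow (B i))" using finB that by simp
    then show ?thesis by (rule finite_subset[rotated]) (auto simp: F_def)
  qed
  have dF: "\<forall>i\<in>{1..p}. \<forall>j\<in>{1..p}. i \<noteq> j \<longrightarrow> F i \<inter> F j = {}"
  proof (intro ballI impI)
    fix i j assume ij: "i \<in> {1..p}" "j \<in> {1..p}" "i \<noteq> j"
    show "F i \<inter> F j = {}"
    proof (rule ccontr)
      assume "F i \<inter> F j \<noteq> {}"
      then obtain f where "f \<subseteq> B i" "f \<subseteq> B j" "card f = r" unfolding F_def by blast
      then show False using ne disjBB ij by blast
    qed
  qed
  have cE2: "card (\<Union>i\<in>{1..p}. F i) = (\<Sum>i\<in>{1..p}. card (F i))"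
    using fF dF by (intro card_UN_disjoint) auto
  have "(\<Sum>i\<in>{1..p}. card (F i)) = (\<Sum>i\<in>{1..p}. card (B i) choose r)"
    unfolding F_def
  proof (intro sum.cong refl)
    fix i assume "i \<in> {1..p}"
    then have "finite (B i)" using finB by blast
    then show "card {f. f \<subseteq> B i \<and> card f = r} = card (B i) choose r" by (rule n_subsets)
  qed
  then have "real (card (\<Union>i\<in>{1..p}. F i)) = (\<Sum>i\<in>{1..p}. real (card (B i) choose r))"
    using cE2 by simp
  also have "\<dots> = real (p - 1) * real (k choose r) + real (q choose r)"
    using card_sum_blocks[of "\<lambda>x. real (x choose r)"] by simp
  finally have cE2': "real (card (\<Union>i\<in>{1..p}. F i)) = real (p - 1) * real (k choose r) + real (q choose r)" .
  have Eeq: "E = E1 \<union> (\<Union>i\<in>{1..p}. F i)"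
    unfolding E1_def F_def HU_edges_def U_eq HU_vertices_def by blast
  have d12: "E1 \<inter> (\<Union>i\<in>{1..p}. F i) = {}"
    unfolding E1_def F_def using disjAB by blast
  have fU2: "finite (\<Union>i\<in>{1..p}. F i)" using fF by blast
  have "card E = card E1 + card (\<Union>i\<in>{1..p}. F i)"
    unfolding Eeq using fSA(3) fU2 d12 by (rule card_Un_disjoint)
  then show ?thesis using cE1 cE2' by simp
qed

lemma bound:
  "real (card E) \<le> real (n choose r) - real ((n - k) choose r) + (real n / real k - 2) * real (k choose r)"
  "k dvd n \<Longrightarrow> real (card E) = real (n choose r) - real ((n - k) choose r) + (real n / real k - 2) * real (k choose r)"
proof -
  have kp: "real k > 0" using k2 by simp
  have nk: "real n / real k = real p + real q / real k" using npq kp by (simp add: field_simps)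
  have pm: "real (p - 1) = real p - 1" using p1 by simp
  have "k * (q choose r) \<le> q * (k choose r)" using binom_ratio[of r q k] r2 qk by simp
  then have "real k * real (q choose r) \<le> real q * real (k choose r)"
    by (metis of_nat_le_iff of_nat_mult)
  then have Q: "real (q choose r) \<le> real q / real k * real (k choose r)"
    using kp by (simp add: field_simps)
  show "real (card E) \<le> real (n choose r) - real ((n - k) choose r) + (real n / real k - 2) * real (k choose r)"
    unfolding cardE nk pm using Q by (simp add: algebra_simps)
  assume "k dvd n"
  then have "k dvd q" using npq by (simp add: dvd_add_right_iff)
  then have "k \<le> q" using q1 by (intro dvd_imp_le) auto
  then have qk': "q = k" using qk by simp
  show "real (card E) = real (n choose r) - real ((n - k) choose r) + (real n / real k - 2) * real (k choose r)"
    unfolding cardE nk pm qk' using kp by (simp add: algebra_simps)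
qed

end

theorem lemma4p1:
  fixes n k r p q :: nat and A :: "'a set" and B :: "nat \<Rightarrow> 'a set"
  assumes "k \<ge> 2" and "r \<ge> 2" and "n \<ge> 2 * k"
    and "n = p * k + q" and "1 \<le> q" and "q \<le> k"
    and "finite A" and "card A = k"
    and "\<forall>i\<in>{1..p}. finite (B i)"
    and "\<forall>i\<in>{1..<p}. card (B i) = k" and "card (B p) = q"
    and "\<forall>i\<in>{1..p}. A \<inter> B i = {}"
    and "\<forall>i\<in>{1..p}. \<forall>j\<in>{1..p}. i \<noteq> j \<longrightarrow> B i \<inter> B j = {}"
  shows "vertex_k_maximal r k (HU_vertices A B p) (HU_edges r A B p)
    \<and> real (card (HU_edges r A B p))
        \<le> real (n choose r) - real ((n - k) choose r) + (real n / real k - 2) * real (k choose r)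
    \<and> (k dvd n \<longrightarrow> real (card (HU_edges r A B p))
        = real (n choose r) - real ((n - k) choose r) + (real n / real k - 2) * real (k choose r))"
proof -
  interpret HUL n k r p q A B using assms by unfold_locales
  have "vertex_k_maximal r k (HU_vertices A B p) (HU_edges r A B p)"
    unfolding vertex_k_maximal_def using uniformE kb_le add_edge by blast
  then show ?thesis using bound by blast
qed


end
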